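(* Let $G$ be a finite graph with node set $V(G)$, at least one edge, and maximal degree $\deg G=\max_{u\in V(G)}|N_G(u)|$. Let $O:\mathbb{R}^{V(G)}\times\mathbb{R}^{V(G)}\to\mathbb{R}^{V(G)}$ be a transition function that is local, i.e. for every node $u$ the component $O(o,d)_u$ depends only on $(o_w)_{w\in N_G(u)\cup\{u\}}$ and on $d_u$, and that satisfies, for constants $C_s>0$, $C_d>0$, $0<\alpha\le 1$, $$\|O(o,d)-O(o',d')\|_1\le C_s\|o-o'\|_1+C_d\|d-d'\|_1^{\alpha}\quad\text{for all }o,o',d,d'\in\mathbb{R}^{V(G)},$$ with $C_s<1/(\deg G+1)$. For $D\in\mathbb{R}^{V(G)}$ let $O(D)$ denote the steady-state observable, i.e. the unique fixed point of $O(\cdot,D)$. Let $D\in\mathbb{R}^{V(G)}$ be a (constant/mean) demand pattern, fix a node $v$ and $a>0$, and let $A\in\mathbb{R}^{V(G)}$ be the anomaly at $v$ given by $A_w=\delta_{vw}a$. Then for every node $w$, $$|O(D)_w-O(D+A)_w|\ \begin{cases}=0,& d_G(w,v)=\infty,\\[2pt] <\dfrac{C_d\,a^{\alpha}\,\big(C_s(\deg G+1)\big)^{d_G(v,w)}}{1-C_s(\deg G+1)},&\text{otherwise.}\end{cases}$$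
   Context: $N_G(u)$ is the set of neighbours of $u$ in $G$; $d_G(u,v)$ is the length of a shortest path in $G$ connecting $u$ and $v$ ($=\infty$ if no such path exists); $\delta_{vw}$ is the Kronecker delta; $\|\cdot\|_1$ is the $\ell^1$-norm. Since $C_s<1$, $O(\cdot,D)$ is a contraction, so the fixed point $O(D)$ exists and is unique. *)

theory Defs
  imports "HOL-Analysis.Analysis" "HOL-Library.Extended_Nat"
begin

text \<open>A finite graph: vertex type 'v of class finite, edge relation E (symmetric, irreflexive).\<close>

definition nbrs :: "('v \<Rightarrow> 'v \<Rightarrow> bool) \<Rightarrow> 'v \<Rightarrow> 'v set" where
  "nbrs E u = {w. E u w}"

definition maxdeg :: "('v::finite \<Rightarrow> 'v \<Rightarrow> bool) \<Rightarrow> nat" where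
  "maxdeg E = Max (range (\<lambda>u. card (nbrs E u)))"

definition walk :: "('v \<Rightarrow> 'v \<Rightarrow> bool) \<Rightarrow> nat \<Rightarrow> 'v \<Rightarrow> 'v \<Rightarrow> bool" where
  "walk E n u v \<longleftrightarrow> (\<exists>f::nat \<Rightarrow> 'v. f 0 = u \<and> f n = v \<and> (\<forall>i<n. E (f i) (f (Suc i))))"

text \<open>Graph distance: length of a shortest path, \<infinity> if none exists (Inf {} = \<infinity>).\<close>
definition gdist :: "('v \<Rightarrow> 'v \<Rightarrow> bool) \<Rightarrow> 'v \<Rightarrow> 'v \<Rightarrow> enat" where
  "gdist E u v = Inf {enat n | n. walk E n u v}"

definition l1norm :: "('v::finite \<Rightarrow> real) \<Rightarrow> real" where
  "l1norm x = (\<Sum>u\<in>UNIV. \<bar>x u\<bar>)"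

definition steady_state :: "(('v \<Rightarrow> real) \<Rightarrow> ('v \<Rightarrow> real) \<Rightarrow> ('v \<Rightarrow> real)) \<Rightarrow> ('v \<Rightarrow> real) \<Rightarrow> ('v \<Rightarrow> real)" where
  "steady_state T D = (THE x. T x D = x)"

end

theory Submission
  imports Defs
begin

lemma l1_nonneg: "0 \<le> l1norm (x::'v::finite \<Rightarrow> real)"
  unfolding l1norm_def by (simp add: sum_nonneg)

lemma l1_comp: "\<bar>x u\<bar> \<le> l1norm (x::'v::finite \<Rightarrow> real)"
  unfolding l1norm_def by (rule member_le_sum) auto

lemma l1_tri: "l1norm (\<lambda>u. (x::'v::finite \<Rightarrow> real) u + y u) \<le> l1norm x + l1norm y"
  unfolding l1norm_def by (simp add: sum.distrib[symmetric] sum_mono abs_triangle_ineq)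

lemma l1_commute: "l1norm (\<lambda>u. (x::'v::finite \<Rightarrow> real) u - y u) = l1norm (\<lambda>u. y u - x u)"
  unfolding l1norm_def by (simp add: abs_minus_commute)

lemma l1_zero: "l1norm (x::'v::finite \<Rightarrow> real) \<le> 0 \<Longrightarrow> x u = 0"
  using l1_comp[of x u] by simp

lemma fp_unique:
  fixes F :: "('v::finite \<Rightarrow> real) \<Rightarrow> ('v \<Rightarrow> real)"
  assumes lip: "\<And>x y. l1norm (\<lambda>u. F x u - F y u) \<le> c * l1norm (\<lambda>u. x u - y u)"
    and c: "0 \<le> c" "c < 1"
  shows "\<exists>!x. F x = x"
proof (rule ex_ex1I)
  define X where "X n = (F ^^ n) (\<lambda>_. 0)" for n
  have XS: "X (Suc n) = F (X n)" for n by (simp add: X_def)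
  define K where "K = l1norm (\<lambda>u. X 1 u - X 0 u)"
  have dif: "l1norm (\<lambda>u. X (Suc n) u - X n u) \<le> c ^ n * K" for n
  proof (induction n)
    case 0 then show ?case by (simp add: K_def)
  next
    case (Suc n)
    have "l1norm (\<lambda>u. X (Suc (Suc n)) u - X (Suc n) u) \<le> c * l1norm (\<lambda>u. X (Suc n) u - X n u)"
      unfolding XS[of "Suc n"] XS[of n] using lip by simp
    also have "\<dots> \<le> c * (c ^ n * K)" using Suc c by (simp add: mult_left_mono)
    finally show ?case by simp
  qed
  define L where "L u = X 0 u + suminf (\<lambda>i. X (Suc i) u - X i u)" for u
  have conv: "(\<lambda>n. X n u) \<longlonglongrightarrow> L u" for u
  proof -
    have "summable (\<lambda>i. X (Suc i) u - X i u)"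
    proof (rule summable_comparison_test')
      show "summable (\<lambda>n. K * c ^ n)" using c by (simp add: summable_geometric)
      show "norm (X (Suc n) u - X n u) \<le> K * c ^ n" for n
        using l1_comp[of "\<lambda>u. X (Suc n) u - X n u" u] dif[of n] by (simp add: mult.commute)
    qed
    then have "(\<lambda>n. X 0 u + (\<Sum>i<n. X (Suc i) u - X i u)) \<longlonglongrightarrow> L u"
      unfolding L_def by (intro tendsto_add tendsto_const summable_LIMSEQ)
    moreover have "X 0 u + (\<Sum>i<n. X (Suc i) u - X i u) = X n u" for n
      by (simp add: sum_lessThan_telescope[of "\<lambda>i. X i u"])
    ultimately show ?thesis by simp
  qed
  have l1conv: "(\<lambda>n. l1norm (\<lambda>u. X n u - L u)) \<longlonglongrightarrow> 0"
    unfolding l1norm_def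
  proof (rule tendsto_null_sum)
    fix u :: 'v
    have "(\<lambda>n. X n u - L u) \<longlonglongrightarrow> L u - L u" by (intro tendsto_diff conv tendsto_const)
    then have "(\<lambda>n. \<bar>X n u - L u\<bar>) \<longlonglongrightarrow> \<bar>L u - L u\<bar>" by (rule tendsto_rabs)
    then show "(\<lambda>n. \<bar>X n u - L u\<bar>) \<longlonglongrightarrow> 0" by simp
  qed
  have g: "(\<lambda>n. c * l1norm (\<lambda>u. X n u - L u) + l1norm (\<lambda>u. X (Suc n) u - L u)) \<longlonglongrightarrow> c * 0 + 0"
    by (intro tendsto_add tendsto_mult tendsto_const l1conv LIMSEQ_Suc[OF l1conv])
  have bnd: "l1norm (\<lambda>u. F L u - L u) \<le> c * l1norm (\<lambda>u. X n u - L u) + l1norm (\<lambda>u. X (Suc n) u - L u)" for n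
  proof -
    have "l1norm (\<lambda>u. F L u - L u) = l1norm (\<lambda>u. (F L u - F (X n) u) + (X (Suc n) u - L u))"
      by (simp add: XS)
    also have "\<dots> \<le> l1norm (\<lambda>u. F L u - F (X n) u) + l1norm (\<lambda>u. X (Suc n) u - L u)"
      by (rule l1_tri)
    also have "l1norm (\<lambda>u. F L u - F (X n) u) \<le> c * l1norm (\<lambda>u. L u - X n u)" by (rule lip)
    also have "l1norm (\<lambda>u. L u - X n u) = l1norm (\<lambda>u. X n u - L u)" by (rule l1_commute)
    finally show ?thesis by simp
  qed
  have "l1norm (\<lambda>u. F L u - L u) \<le> 0"
    using LIMSEQ_le_const[OF g[simplified]] bnd by blast
  then have "F L = L" using l1_zero by fastforce
  then show "\<exists>x. F x = x" by blast
next
  fix x y assume fx: "F x = x" and fy: "F y = y"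
  have "l1norm (\<lambda>u. x u - y u) \<le> c * l1norm (\<lambda>u. x u - y u)"
    using lip[of x y] fx fy by simp
  then have "(1 - c) * l1norm (\<lambda>u. x u - y u) \<le> 0" by (simp add: algebra_simps)
  then have "l1norm (\<lambda>u. x u - y u) \<le> 0" using c
    by (simp add: mult_le_0_iff)
  then show "x = y" using l1_zero[of "\<lambda>u. x u - y u"] by fastforce
qed

lemma walk_rev:
  assumes sym: "\<And>x y. E x y \<Longrightarrow> E y x" and w: "walk E n u v"
  shows "walk E n v u"
proof -
  obtain f where f: "f 0 = u" "f n = v" "\<forall>i<n. E (f i) (f (Suc i))" using w unfolding walk_def by blast
  have "\<forall>i<n. E (f (n - i)) (f (n - Suc i))"
  proof (intro allI impI)
    fix i assume i: "i < n"
    have "E (f (n - Suc i)) (f (Suc (n - Suc i)))" using f(3) i by simp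
    moreover have "Suc (n - Suc i) = n - i" using i by simp
    ultimately show "E (f (n - i)) (f (n - Suc i))" using sym by metis
  qed
  then show ?thesis unfolding walk_def using f by (intro exI[of _ "\<lambda>i. f (n - i)"]) auto
qed

lemma walk_snoc:
  assumes w: "walk E n u v" and e: "E v x"
  shows "walk E (Suc n) u x"
proof -
  obtain f where f: "f 0 = u" "f n = v" "\<forall>i<n. E (f i) (f (Suc i))" using w unfolding walk_def by blast
  show ?thesis unfolding walk_def using f e
    by (intro exI[of _ "f(Suc n := x)"]) (auto simp: less_Suc_eq)
qed

lemma walk_0: "walk E 0 u u"
  unfolding walk_def by auto

lemma gdist_fin:
  assumes "gdist E v w \<noteq> \<infinity>" "walk E n v w"
  shows "the_enat (gdist E v w) \<le> n"
proof -
  have "gdist E v w \<le> enat n" unfolding gdist_def using assms(2) by (intro Inf_lower) auto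
  moreover have "gdist E v w = enat (the_enat (gdist E v w))" using assms(1) by auto
  ultimately show ?thesis by (metis enat_ord_simps(1))
qed

lemma gdist_inf:
  assumes "gdist E w v = \<infinity>" "walk E n w v"
  shows False
proof -
  have "gdist E w v \<le> enat n" unfolding gdist_def using assms(2) by (intro Inf_lower) auto
  then show False using assms(1) by simp
qed

theorem theorem1:
  fixes E :: "'v::finite \<Rightarrow> 'v \<Rightarrow> bool"
    and T :: "('v \<Rightarrow> real) \<Rightarrow> ('v \<Rightarrow> real) \<Rightarrow> ('v \<Rightarrow> real)"
    and Cs Cd \<alpha> a :: real and D :: "'v \<Rightarrow> real" and v :: 'v
  assumes sym: "\<And>x y. E x y \<Longrightarrow> E y x"
    and irrefl: "\<And>x. \<not> E x x"
    and edge: "\<exists>x y. E x y"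
    and local: "\<And>o1 o2 d1 d2 u. (\<forall>w. (E u w \<or> w = u) \<longrightarrow> o1 w = o2 w) \<Longrightarrow> d1 u = d2 u
                  \<Longrightarrow> T o1 d1 u = T o2 d2 u"
    and lip: "\<And>o1 o2 d1 d2. l1norm (\<lambda>u. T o1 d1 u - T o2 d2 u)
                  \<le> Cs * l1norm (\<lambda>u. o1 u - o2 u) + Cd * (l1norm (\<lambda>u. d1 u - d2 u)) powr \<alpha>"
    and Cs_pos: "Cs > 0" and Cd_pos: "Cd > 0"
    and alpha: "0 < \<alpha>" "\<alpha> \<le> 1"
    and Cs_small: "Cs < 1 / (real (maxdeg E) + 1)"
    and a_pos: "a > 0"
  shows "\<forall>w. (gdist E w v = \<infinity> \<longrightarrow>
              \<bar>steady_state T D w - steady_state T (\<lambda>u. D u + (if u = v then a else 0)) w\<bar> = 0)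
           \<and> (gdist E w v \<noteq> \<infinity> \<longrightarrow>
              \<bar>steady_state T D w - steady_state T (\<lambda>u. D u + (if u = v then a else 0)) w\<bar>
                < Cd * a powr \<alpha> * (Cs * (real (maxdeg E) + 1)) ^ (the_enat (gdist E v w))
                  / (1 - Cs * (real (maxdeg E) + 1)))"
proof -
  define \<Delta> where "\<Delta> = real (maxdeg E)"
  define c where "c = Cs * (\<Delta> + 1)"
  define Dp where "Dp = (\<lambda>u. D u + (if u = v then a else 0))"
  define x where "x = steady_state T D"
  define y where "y = steady_state T Dp"
  have degle: "card (nbrs E u) \<le> maxdeg E" for u
    unfolding maxdeg_def by (rule Max_ge) auto
  obtain x0 y0 where e: "E x0 y0" using edge by blast
  have "card (nbrs E x0) \<ge> 1"
  proof -
    have "y0 \<in> nbrs E x0" using e by (simp add: nbrs_def)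
    then have "nbrs E x0 \<noteq> {}" by blast
    then show ?thesis by (simp add: Suc_le_eq card_gt_0_iff)
  qed
  then have D1: "\<Delta> \<ge> 1" using degle[of x0] unfolding \<Delta>_def by linarith
  have c1: "c < 1" using Cs_small Cs_pos unfolding c_def \<Delta>_def
    by (simp add: field_simps)
  have cCs: "Cs < c" using D1 Cs_pos unfolding c_def by (simp add: algebra_simps)
  have c0: "0 < c" using cCs Cs_pos by simp
  have lipD: "l1norm (\<lambda>u. T o1 d u - T o2 d u) \<le> Cs * l1norm (\<lambda>u. o1 u - o2 u)" for o1 o2 d
    using lip[of o1 d o2 d] alpha by (simp add: l1norm_def)
  have fpx: "T x D = x"
  proof -
    have "\<exists>!z. T z D = z" using lipD Cs_pos Cs_small D1 cCs c1
      by (intro fp_unique[where c=Cs]) auto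
    then show ?thesis unfolding x_def steady_state_def by (rule theI')
  qed
  have fpy: "T y Dp = y"
  proof -
    have "\<exists>!z. T z Dp = z" using lipD Cs_pos Cs_small D1 cCs c1
      by (intro fp_unique[where c=Cs]) auto
    then show ?thesis unfolding y_def steady_state_def by (rule theI')
  qed
  define B where "B = l1norm (\<lambda>u. x u - y u)"
  have B0: "0 \<le> B" unfolding B_def by (rule l1_nonneg)
  have la: "l1norm (\<lambda>u. D u - Dp u) = a"
  proof -
    have "l1norm (\<lambda>u. D u - Dp u) = (\<Sum>u\<in>UNIV. if u = v then a else 0)"
      unfolding l1norm_def Dp_def using a_pos by (intro sum.cong) auto
    then show ?thesis by simp
  qed
  have "B \<le> Cs * B + Cd * a powr \<alpha>"
    using lip[of x D y Dp] fpx fpy la unfolding B_def by simp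
  then have Bb: "(1 - Cs) * B \<le> Cd * a powr \<alpha>" by (simp add: algebra_simps)
  have loc: "\<bar>x u - y u\<bar> \<le> Cs * (\<Sum>w\<in>{w. E u w \<or> w = u}. \<bar>x w - y w\<bar>)" if uv: "u \<noteq> v" for u
  proof -
    define o2 where "o2 = (\<lambda>w. if E u w \<or> w = u then y w else x w)"
    have "T o2 D u = T y Dp u" using uv unfolding Dp_def o2_def by (intro local) auto
    then have "\<bar>x u - y u\<bar> = \<bar>T x D u - T o2 D u\<bar>" using fpx fpy by metis
    also have "\<dots> \<le> l1norm (\<lambda>u. T x D u - T o2 D u)" by (rule l1_comp)
    also have "\<dots> \<le> Cs * l1norm (\<lambda>w. x w - o2 w)" by (rule lipD)
    also have "l1norm (\<lambda>w. x w - o2 w) = (\<Sum>w\<in>UNIV. if w \<in> {w. E u w \<or> w = u} then \<bar>x w - y w\<bar> else 0)"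
      unfolding l1norm_def o2_def by (intro sum.cong) auto
    also have "\<dots> = (\<Sum>w\<in>{w. E u w \<or> w = u}. \<bar>x w - y w\<bar>)"
      by (simp add: sum.If_cases)
    finally show ?thesis .
  qed
  have ind: "\<forall>u. (\<forall>n. walk E n v u \<longrightarrow> k \<le> n) \<longrightarrow> \<bar>x u - y u\<bar> \<le> c ^ k * B" for k
  proof (induction k)
    case 0
    then show ?case using l1_comp[of "\<lambda>u. x u - y u"] by (simp add: B_def)
  next
    case (Suc k)
    show ?case
    proof (intro allI impI)
      fix u assume h: "\<forall>n. walk E n v u \<longrightarrow> Suc k \<le> n"
      have uv: "u \<noteq> v" using h walk_0[of E v] by force
      let ?N = "{w. E u w \<or> w = u}"
      have each: "\<bar>x w - y w\<bar> \<le> c ^ k * B" if w: "w \<in> ?N" for w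
      proof -
        have "\<forall>n. walk E n v w \<longrightarrow> k \<le> n"
        proof (intro allI impI)
          fix n assume wk: "walk E n v w"
          show "k \<le> n"
          proof (cases "w = u")
            case True then show ?thesis using h wk by force
          next
            case False
            then have "E w u" using w sym by auto
            then have "walk E (Suc n) v u" using walk_snoc wk by metis
            then show ?thesis using h by force
          qed
        qed
        then show ?thesis using Suc.IH by blast
      qed
      have "?N = insert u (nbrs E u)" by (auto simp: nbrs_def)
      then have "card ?N \<le> Suc (card (nbrs E u))" by (simp add: card_insert_if)
      then have cN: "real (card ?N) \<le> \<Delta> + 1" using degle[of u] unfolding \<Delta>_def by linarith
      have "(\<Sum>w\<in>?N. \<bar>x w - y w\<bar>) \<le> (\<Sum>w\<in>?N. c ^ k * B)" using each by (rule sum_mono)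
      also have "\<dots> = real (card ?N) * (c ^ k * B)" by simp
      also have "\<dots> \<le> (\<Delta> + 1) * (c ^ k * B)" using cN c0 B0 by (intro mult_right_mono) auto
      finally have "(\<Sum>w\<in>?N. \<bar>x w - y w\<bar>) \<le> (\<Delta> + 1) * (c ^ k * B)" .
      then have "\<bar>x u - y u\<bar> \<le> Cs * ((\<Delta> + 1) * (c ^ k * B))"
        using loc[OF uv] Cs_pos by (meson mult_left_mono less_imp_le order_trans)
      then show "\<bar>x u - y u\<bar> \<le> c ^ Suc k * B" unfolding c_def by (simp add: algebra_simps)
    qed
  qed
  have pos: "0 < Cd * a powr \<alpha>" using Cd_pos a_pos by simp
  show ?thesis
  proof (intro allI conjI impI)
    fix w assume inf: "gdist E w v = \<infinity>"
    have nw: "\<forall>n. walk E n v w \<longrightarrow> k \<le> n" for k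
      using gdist_inf[OF inf] walk_rev[of E, OF sym] by blast
    have "(\<lambda>k. c ^ k * B) \<longlonglongrightarrow> 0 * B"
      using c0 c1 by (intro tendsto_mult LIMSEQ_power_zero tendsto_const) auto
    then have "\<bar>x w - y w\<bar> \<le> 0"
    proof -
      have "\<bar>x w - y w\<bar> \<le> c ^ k * B" for k using ind nw by blast
      then show ?thesis using LIMSEQ_le_const[OF \<open>(\<lambda>k. c ^ k * B) \<longlonglongrightarrow> 0 * B\<close>[simplified]] by blast
    qed
    then show "\<bar>steady_state T D w - steady_state T (\<lambda>u. D u + (if u = v then a else 0)) w\<bar> = 0"
      unfolding x_def y_def Dp_def by simp
  next
    fix w assume fin: "gdist E w v \<noteq> \<infinity>"
    have fin2: "gdist E v w \<noteq> \<infinity>"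
    proof
      assume "gdist E v w = \<infinity>"
      then have "\<not> walk E n v w" for n using gdist_inf[of E v w n] by blast
      then have "\<not> walk E n w v" for n using walk_rev[of E, OF sym] by blast
      then have "gdist E w v = \<infinity>" unfolding gdist_def by (simp add: top_enat_def[symmetric])
      then show False using fin by simp
    qed
    define k where "k = the_enat (gdist E v w)"
    have "\<forall>n. walk E n v w \<longrightarrow> k \<le> n" using gdist_fin[OF fin2] unfolding k_def by blast
    then have b1: "\<bar>x w - y w\<bar> \<le> c ^ k * B" using ind by blast
    have "B \<le> Cd * a powr \<alpha> / (1 - Cs)" using Bb cCs c1 by (simp add: field_simps)
    also have "\<dots> < Cd * a powr \<alpha> / (1 - c)" using pos cCs c1
      by (intro divide_strict_left_mono) auto
    finally have "c ^ k * B < c ^ k * (Cd * a powr \<alpha> / (1 - c))" using c0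
      by (intro mult_strict_left_mono) auto
    with b1 have "\<bar>x w - y w\<bar> < Cd * a powr \<alpha> * c ^ k / (1 - c)" by (simp add: mult.commute mult.left_commute)
    then show "\<bar>steady_state T D w - steady_state T (\<lambda>u. D u + (if u = v then a else 0)) w\<bar>
                < Cd * a powr \<alpha> * (Cs * (real (maxdeg E) + 1)) ^ (the_enat (gdist E v w))
                  / (1 - Cs * (real (maxdeg E) + 1))"
      unfolding x_def y_def Dp_def k_def c_def \<Delta>_def by simp
  qed
qed

end
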